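(* Let $U$ be a unicyclic graph with an edge $\ell u\in E(U)$ such that $\deg(\ell)=1$ and $u\in V(\operatorname{Cycles}(U))$. (i) If $v\in V(\operatorname{Cycles}(U))$, $v\neq u$ and $\deg(v)>2$, then there exists a u-switch $\tau$ over $U$ such that $\ell v\in E(\tau(U))$. (ii) If $v\notin V(\operatorname{Cycles}(U))$ and $\deg(v)\ge2$, then there exists a u-switch $\tau$ over $U$ such that $\ell v\in E(\tau(U))$.
   Context: Graphs are finite, simple, undirected, labeled. A unicyclic graph is a connected graph with exactly one cycle. For vertices $a,b,c,d$, $A=\binom{a\ b}{c\ d}$ is interchangeable in $G$ if $ab,cd\in E(G)$, $\{a,b\}\cap\{c,d\}=\varnothing$, $ac,bd\notin E(G)$; the 2-switch $\tau_A$ sends $G$ to $G-ab-cd+ac+bd$ if $A$ is interchangeable and to $G$ otherwise (trivial). A nontrivial 2-switch $\tau$ over a unicyclic $U$ is a u-switch if $\tau(U)$ is unicyclic. $\operatorname{Cycles}(G)$ is the subgraph induced by vertices lying on some cycle of $G$. *)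

theory Defs
  imports Main
begin

definition simple_graph :: "'a set \<Rightarrow> 'a set set \<Rightarrow> bool" where
  "simple_graph V E \<longleftrightarrow> finite V \<and>
     (\<forall>e\<in>E. \<exists>x y. e = {x, y} \<and> x \<noteq> y \<and> x \<in> V \<and> y \<in> V)"

definition connected_graph :: "'a set \<Rightarrow> 'a set set \<Rightarrow> bool" where
  "connected_graph V E \<longleftrightarrow>
     (\<forall>x\<in>V. \<forall>y\<in>V. (\<lambda>a b. {a, b} \<in> E)\<^sup>*\<^sup>* x y)"

definition degree :: "'a set set \<Rightarrow> 'a \<Rightarrow> nat" where
  "degree E v = card {e \<in> E. v \<in> e}"

text \<open>A cycle of G, given by its edge set: the edges of a closed path through
 at least 3 distinct vertices.\<close>

definition is_cycle :: "'a set set \<Rightarrow> 'a set set \<Rightarrow> bool" where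
  "is_cycle E C \<longleftrightarrow> (\<exists>vs. length vs \<ge> 3 \<and> distinct vs \<and>
      C = {{vs ! i, vs ! ((i + 1) mod length vs)} | i. i < length vs} \<and> C \<subseteq> E)"

definition unicyclic :: "'a set \<Rightarrow> 'a set set \<Rightarrow> bool" where
  "unicyclic V E \<longleftrightarrow> simple_graph V E \<and> connected_graph V E \<and> (\<exists>!C. is_cycle E C)"

definition cycle_vertices :: "'a set set \<Rightarrow> 'a set" where
  "cycle_vertices E = \<Union>{\<Union>C | C. is_cycle E C}"

definition interchangeable :: "'a set set \<Rightarrow> 'a \<Rightarrow> 'a \<Rightarrow> 'a \<Rightarrow> 'a \<Rightarrow> bool" where
  "interchangeable E a b c d \<longleftrightarrow> {a, b} \<in> E \<and> {c, d} \<in> E \<and> {a, b} \<inter> {c, d} = {}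
      \<and> {a, c} \<notin> E \<and> {b, d} \<notin> E"

definition two_switch :: "'a set set \<Rightarrow> 'a \<Rightarrow> 'a \<Rightarrow> 'a \<Rightarrow> 'a \<Rightarrow> 'a set set" where
  "two_switch E a b c d =
     (if interchangeable E a b c d then (E - {{a, b}, {c, d}}) \<union> {{a, c}, {b, d}} else E)"

definition u_switch :: "'a set \<Rightarrow> 'a set set \<Rightarrow> 'a \<Rightarrow> 'a \<Rightarrow> 'a \<Rightarrow> 'a \<Rightarrow> bool" where
  "u_switch V E a b c d \<longleftrightarrow> unicyclic V E \<and> interchangeable E a b c d
      \<and> unicyclic V (two_switch E a b c d)"

end

theory Submission imports Defs "HOL-Library.Transitive_Closure_Table" begin

definition rch :: "'a set set \<Rightarrow> 'a \<Rightarrow> 'a \<Rightarrow> bool" where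
  "rch F = (\<lambda>a b. {a, b} \<in> F)\<^sup>*\<^sup>*"

lemma rch_refl: "rch F a a" by (simp add: rch_def)

lemma rch_edge: "{a,b} \<in> F \<Longrightarrow> rch F a b"
  unfolding rch_def by (rule r_into_rtranclp) simp

lemma rch_trans: "rch F a b \<Longrightarrow> rch F b c \<Longrightarrow> rch F a c"
  unfolding rch_def by (rule rtranclp_trans)

lemma rch_sym: "rch F a b \<Longrightarrow> rch F b a"
  unfolding rch_def
proof (induction rule: rtranclp_induct)
  case base then show ?case by simp
next
  case (step y z)
  then have "{z,y} \<in> F" by (simp add: insert_commute)
  then show ?case using step(3) by (rule converse_rtranclp_into_rtranclp)
qed

lemma rch_mono: "F \<subseteq> G \<Longrightarrow> rch F a b \<Longrightarrow> rch G a b"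
proof -
  assume FG: "F \<subseteq> G" and r: "rch F a b"
  have "(\<lambda>a b. {a, b} \<in> F)\<^sup>*\<^sup>* a b" using r by (simp add: rch_def)
  then have "(\<lambda>a b. {a, b} \<in> G)\<^sup>*\<^sup>* a b"
  proof (induction rule: rtranclp_induct)
    case base then show ?case by simp
  next
    case (step y z) then show ?case using FG by (meson rtranclp.rtrancl_into_rtrancl subsetD)
  qed
  then show ?thesis by (simp add: rch_def)
qed

lemma rch_insert: "rch (insert e F) a b \<Longrightarrow> rch F a b \<or> (\<exists>z\<in>e. rch F a z)"
  unfolding rch_def
proof (induction rule: rtranclp_induct)
  case base then show ?case by simp
next
  case (step y z)
  show ?case
  proof (cases "{y,z} = e")
    case True then show ?thesis using step(3) by auto
  next
    case False then have "{y,z} \<in> F" using step(2) by simp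
    then show ?thesis using step(3) by (meson rtranclp.rtrancl_into_rtrancl)
  qed
qed

lemma rch_iso: "(\<And>z. {z,l} \<notin> F) \<Longrightarrow> rch F a l \<Longrightarrow> a = l"
proof -
  assume iso: "\<And>z. {z,l} \<notin> F" and r: "rch F a l"
  have "(\<lambda>a b. {a, b} \<in> F)\<^sup>*\<^sup>* a b \<Longrightarrow> b = l \<Longrightarrow> a = l" for b
  proof (induction rule: rtranclp_induct)
    case base then show ?case by simp
  next
    case (step y z)
    have "{y,z} \<in> F" by (rule step(2))
    then show ?case using iso step(4) by blast
  qed
  then show ?thesis using r by (simp add: rch_def)
qed

lemma cyc_edge_eq:
  assumes "distinct vs" "length vs \<ge> 3" "i < length vs" "j < length vs"
    "{vs!i, vs!((i+1) mod length vs)} = {vs!j, vs!((j+1) mod length vs)}"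
  shows "i = j"
proof -
  let ?n = "length vs"
  have n0: "0 < ?n" using assms(2) by linarith
  have m1: "(i+1) mod ?n < ?n" "(j+1) mod ?n < ?n" using n0 by auto
  from assms(5) have "(vs!i = vs!j \<and> vs!((i+1) mod ?n) = vs!((j+1) mod ?n)) \<or>
     (vs!i = vs!((j+1) mod ?n) \<and> vs!((i+1) mod ?n) = vs!j)"
    by (simp add: doubleton_eq_iff)
  then show ?thesis
  proof
    assume "vs!i = vs!j \<and> vs!((i+1) mod ?n) = vs!((j+1) mod ?n)"
    then show ?thesis using assms nth_eq_iff_index_eq by blast
  next
    assume h: "vs!i = vs!((j+1) mod ?n) \<and> vs!((i+1) mod ?n) = vs!j"
    then have a: "i = (j+1) mod ?n" and b: "(i+1) mod ?n = j"
      using assms m1 nth_eq_iff_index_eq by blast+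
    show ?thesis
    proof (cases "j + 1 < ?n")
      case True
      then have "i = j + 1" using a by simp
      show ?thesis
      proof (cases "j + 2 < ?n")
        case True
        then show ?thesis using b \<open>i = j + 1\<close> by simp
      next
        case False
        then have "j + 2 = ?n" using \<open>j + 1 < ?n\<close> by simp
        then have "j = 0" using b \<open>i = j + 1\<close> by simp
        then show ?thesis using \<open>j + 2 = ?n\<close> assms(2) by simp
      qed
    next
      case False
      then have "j + 1 = ?n" using assms(4) by simp
      then have "i = 0" using a by simp
      then show ?thesis using b assms(2) \<open>j + 1 = ?n\<close> by simp
    qed
  qed
qed


lemma prop_around:
  assumes n: "n = length vs" "0 < n" and i: "i < n"
    and st: "\<And>j. j < n \<Longrightarrow> j \<noteq> i \<Longrightarrow> P (vs!j) = P (vs!((j+1) mod n))"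
  shows "P (vs!i) = P (vs!((i+1) mod n))"
proof -
  have IHk: "k < n \<Longrightarrow> P (vs!((i+1+k) mod n)) = P (vs!((i+1) mod n))" for k
  proof (induction k)
    case 0 then show ?case by simp
  next
    case (Suc k)
    let ?j = "(i+1+k) mod n"
    have jn: "?j < n" using n by simp
    have ji: "?j \<noteq> i"
    proof
      assume h: "?j = i"
      have "i + 1 + k < 2 * n" using Suc.prems i by simp
      moreover have "i+1+k \<ge> n \<Longrightarrow> ?j = i+1+k-n"
        using \<open>i + 1 + k < 2 * n\<close> by (simp add: le_mod_geq)
      moreover have "i+1+k < n \<Longrightarrow> ?j = i+1+k" by simp
      ultimately show False using h Suc.prems by (cases "i+1+k \<ge> n") auto
    qed
    have "(?j + 1) mod n = (i+1+Suc k) mod n" by (simp add: mod_Suc_eq)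
    then show ?case using st[OF jn ji] Suc by simp
  qed
  have "n - 1 < n" using n by simp
  then have h: "P (vs!((i+1+(n-1)) mod n)) = P (vs!((i+1) mod n))" by (rule IHk)
  have "i+1+(n-1) = i + n" using n by simp
  then have "(i+1+(n-1)) mod n = i" using i by simp
  then show ?thesis using h by metis
qed

lemma all_same:
  assumes n: "n = length vs" and st: "\<And>j. j < n \<Longrightarrow> P (vs!j) = P (vs!((j+1) mod n))"
  shows "m < n \<Longrightarrow> P (vs!m) = P (vs!0)"
proof (induction m)
  case 0 then show ?case by simp
next
  case (Suc m)
  then have "P (vs!m) = P (vs!(Suc m mod n))" using st[of m] by simp
  then show ?case using Suc by simp
qed

lemma cut_lemma:
  assumes cyc: "is_cycle G C" and e: "{x,y} \<in> C" and xS: "x \<in> S" and yS: "y \<notin> S"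
    and only: "\<And>a b. {a,b} \<in> G \<Longrightarrow> a \<in> S \<Longrightarrow> b \<notin> S \<Longrightarrow> {a,b} = {x,y}"
  shows False
proof -
  obtain vs where vs: "length vs \<ge> 3" "distinct vs"
    "C = {{vs ! i, vs ! ((i + 1) mod length vs)} | i. i < length vs}" "C \<subseteq> G"
    using cyc unfolding is_cycle_def by blast
  let ?n = "length vs"
  obtain i where i: "i < ?n" "{x,y} = {vs ! i, vs ! ((i + 1) mod ?n)}" using e vs(3) by blast
  have cr: "(vs!i \<in> S) \<noteq> (vs!((i+1) mod ?n) \<in> S)" using i(2) xS yS by (auto simp: doubleton_eq_iff)
  have "\<exists>j. j < ?n \<and> j \<noteq> i \<and> (vs!j \<in> S) \<noteq> (vs!((j+1) mod ?n) \<in> S)"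
  proof (rule ccontr)
    assume "\<not> ?thesis"
    then have st: "\<And>j. j < ?n \<Longrightarrow> j \<noteq> i \<Longrightarrow> (vs!j \<in> S) = (vs!((j+1) mod ?n) \<in> S)" by blast
    have n0: "0 < ?n" using vs(1) by linarith
    have "(vs!i \<in> S) = (vs!((i+1) mod ?n) \<in> S)"
      by (rule prop_around[OF refl n0 i(1) st])
    then show False using cr by simp
  qed
  then obtain j where j: "j < ?n" "j \<noteq> i" "(vs!j \<in> S) \<noteq> (vs!((j+1) mod ?n) \<in> S)" by blast
  have fG: "{vs!j, vs!((j+1) mod ?n)} \<in> G" using vs(3,4) j(1) by blast
  have "{vs!j, vs!((j+1) mod ?n)} = {x,y}"
  proof (cases "vs!j \<in> S")
    case True then show ?thesis using j(3) only fG by auto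
  next
    case False
    have f2: "{vs!((j+1) mod ?n), vs!j} \<in> G" using fG by (simp add: insert_commute)
    have "{vs!((j+1) mod ?n), vs!j} = {x,y}" using only[OF f2] j(3) False by simp
    then show ?thesis by (simp add: insert_commute)
  qed
  then have "j = i" using cyc_edge_eq[of vs j i] vs(1,2) j(1) i by simp
  then show False using j(2) by simp
qed

lemma cycle_deg:
  assumes "is_cycle G C" shows "card {e\<in>C. v \<in> e} \<le> 2"
proof -
  obtain vs where vs: "length vs \<ge> 3" "distinct vs"
    "C = {{vs ! i, vs ! ((i + 1) mod length vs)} | i. i < length vs}"
    using assms unfolding is_cycle_def by blast
  let ?n = "length vs"
  have n0: "0 < ?n" using vs(1) by linarith
  show ?thesis
  proof (cases "v \<in> set vs")
    case False
    then have "{e\<in>C. v \<in> e} = {}" using vs(3) n0 by (auto simp: nth_mem)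
    then show ?thesis by (metis card.empty zero_le)
  next
    case True
    then obtain k where k: "k < ?n" "vs!k = v" by (metis in_set_conv_nth)
    let ?p = "(k + ?n - 1) mod ?n"
    have sub: "{e\<in>C. v \<in> e} \<subseteq> {{vs!k, vs!((k+1) mod ?n)}, {vs!?p, vs!((?p+1) mod ?n)}}"
    proof
      fix e assume "e \<in> {e\<in>C. v \<in> e}"
      then obtain i where i: "i < ?n" "e = {vs ! i, vs ! ((i + 1) mod ?n)}" "v \<in> e" using vs(3) by blast
      have "vs!i = v \<or> vs!((i+1) mod ?n) = v" using i by auto
      then have "i = k \<or> (i+1) mod ?n = k"
        using k i(1) vs(2) n0 nth_eq_iff_index_eq by (metis mod_less_divisor)
      moreover have "(i+1) mod ?n = k \<Longrightarrow> i = ?p"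
      proof -
        assume h: "(i+1) mod ?n = k"
        show "i = ?p"
        proof (cases "i + 1 < ?n")
          case True then have "i + 1 = k" using h by simp
          then have "k + ?n - 1 = i + ?n" by simp
          then show ?thesis using i(1) by simp
        next
          case False then have "i + 1 = ?n" using i(1) by simp
          then show ?thesis using h by simp
        qed
      qed
      ultimately show "e \<in> {{vs!k, vs!((k+1) mod ?n)}, {vs!?p, vs!((?p+1) mod ?n)}}" using i(2) by auto
    qed
    have "card {e\<in>C. v \<in> e} \<le> card {{vs!k, vs!((k+1) mod ?n)}, {vs!?p, vs!((?p+1) mod ?n)}}"
      by (rule card_mono[OF _ sub]) simp
    also have "\<dots> \<le> 2" by (simp add: card_insert_if)
    finally show ?thesis .
  qed
qed

lemma cycle_vert:
  assumes "is_cycle G C" "v \<in> \<Union>C"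
  obtains vs k where "length vs \<ge> 3" "distinct vs"
    "C = {{vs ! i, vs ! ((i + 1) mod length vs)} | i. i < length vs}" "C \<subseteq> G"
    "k < length vs" "vs!k = v"
proof -
  obtain vs where vs: "length vs \<ge> 3" "distinct vs"
    "C = {{vs ! i, vs ! ((i + 1) mod length vs)} | i. i < length vs}" "C \<subseteq> G"
    using assms unfolding is_cycle_def by blast
  have n0: "0 < length vs" using vs(1) by linarith
  have "v \<in> set vs" using assms(2) vs(3) n0 by (auto simp: nth_mem)
  then obtain k where "k < length vs" "vs!k = v" by (metis in_set_conv_nth)
  then show ?thesis using that vs by blast
qed

lemma cycle_mono: "is_cycle G C \<Longrightarrow> C \<subseteq> G' \<Longrightarrow> is_cycle G' C"
  unfolding is_cycle_def by blast

lemma bridge: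
  assumes xy: "{x,y} \<in> G" "x \<noteq> y" and r: "rch (G - {{x,y}}) y x"
  shows "\<exists>C. is_cycle G C \<and> {x,y} \<in> C"
proof -
  let ?R = "\<lambda>a b. {a, b} \<in> G - {{x,y}}"
  obtain xs where "rtrancl_path ?R y xs x" using r rtranclp_eq_rtrancl_path unfolding rch_def by metis
  then obtain ys where p: "rtrancl_path ?R y ys x" and d: "distinct (y # ys)"
    using rtrancl_path_distinct by metis
  have ysne: "ys \<noteq> []" using p xy(2) by (auto elim: rtrancl_path.cases)
  have lst: "last ys = x" using rtrancl_path_last[OF p ysne] .
  let ?vs = "y # ys"
  let ?n = "length ?vs"
  have len3: "?n \<ge> 3"
  proof (rule ccontr)
    assume "\<not> ?n \<ge> 3"
    then have "length ys < 2" by simp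
    moreover have "length ys \<noteq> 0" using ysne by simp
    ultimately have "length ys = 1" by linarith
    then obtain a where "ys = [a]" by (metis One_nat_def length_0_conv length_Suc_conv)
    then have "ys = [x]" using lst by simp
    then have "?R y x" using rtrancl_path_nth[OF p, of 0] by simp
    then show False by (simp add: insert_commute)
  qed
  define C where "C = {{?vs ! i, ?vs ! ((i + 1) mod ?n)} | i. i < ?n}"
  have lastv: "?vs ! (?n - 1) = x" using lst ysne by (simp add: last_conv_nth)
  have CG: "C \<subseteq> G"
  proof
    fix e assume "e \<in> C"
    then obtain i where i: "i < ?n" "e = {?vs ! i, ?vs ! ((i + 1) mod ?n)}" unfolding C_def by blast
    show "e \<in> G"
    proof (cases "i + 1 < ?n")
      case True
      then have "?R (?vs ! i) (ys ! i)" using rtrancl_path_nth[OF p, of i] by simp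
      moreover have "?vs ! ((i + 1) mod ?n) = ys ! i" using True by simp
      ultimately show ?thesis using i(2) by simp
    next
      case False
      then have "i = ?n - 1" using i(1) by simp
      then have "e = {x, y}" using i(2) lastv by simp
      then show ?thesis using xy by simp
    qed
  qed
  have "{x,y} \<in> C"
  proof -
    have "{?vs ! (?n-1), ?vs ! (((?n-1) + 1) mod ?n)} = {x,y}" using lastv by simp
    moreover have "?n - 1 < ?n" by simp
    ultimately show ?thesis unfolding C_def by blast
  qed
  moreover have "is_cycle G C" unfolding is_cycle_def using len3 d CG C_def by blast
  ultimately show ?thesis by blast
qed


lemma sg_edge: "simple_graph V E \<Longrightarrow> {a,b} \<in> E \<Longrightarrow> a \<in> V \<and> b \<in> V \<and> a \<noteq> b"
  unfolding simple_graph_def by (metis doubleton_eq_iff)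

lemma switch_ok:
  assumes U: "unicyclic V E" and C: "is_cycle E C" and uniq: "\<And>C'. is_cycle E C' \<Longrightarrow> C' = C"
    and lu: "{l,u} \<in> E" and ledge: "\<And>x. {l,x} \<in> E \<Longrightarrow> x = u"
    and vw: "{v,w} \<in> E" and vwC: "{v,w} \<notin> C"
    and vS: "\<not> rch (E - {{v,w}}) w v" and uS: "\<not> rch (E - {{v,w}}) w u"
    and lv: "l \<noteq> v" and lw: "l \<noteq> w" and uv: "u \<noteq> v"
  shows "u_switch V E l u v w \<and> {l,v} \<in> two_switch E l u v w"
proof -
  have sg: "simple_graph V E" and cg: "connected_graph V E" using U unfolding unicyclic_def by auto
  define S where "S = {z. rch (E - {{v,w}}) w z}"
  have wS: "w \<in> S" unfolding S_def by (simp add: rch_refl)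
  have vS': "v \<notin> S" "u \<notin> S" using vS uS unfolding S_def by auto
  have Sclosed: "\<And>a b. {a,b} \<in> E - {{v,w}} \<Longrightarrow> a \<in> S \<Longrightarrow> b \<in> S"
  proof -
    fix a b assume ab: "{a,b} \<in> E - {{v,w}}" "a \<in> S"
    have "rch (E - {{v,w}}) w a" using ab(2) unfolding S_def by simp
    moreover have "rch (E - {{v,w}}) a b" using ab(1) by (rule rch_edge)
    ultimately have "rch (E - {{v,w}}) w b" by (rule rch_trans)
    then show "b \<in> S" unfolding S_def by simp
  qed
  have uw: "u \<noteq> w" using wS vS' by auto
  have lu_ne: "l \<noteq> u" using sg_edge[OF sg lu] by simp
  have luvw: "{l,u} \<noteq> {v,w}" using lv lw by (auto simp: doubleton_eq_iff)
  have lS: "l \<notin> S"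
  proof
    assume "l \<in> S"
    then have "u \<in> S" using Sclosed[of l u] lu luvw by simp
    then show False using vS' by simp
  qed
  have uwE: "{u,w} \<notin> E"
  proof
    assume "{u,w} \<in> E"
    then have "{w,u} \<in> E - {{v,w}}" using uv by (auto simp: doubleton_eq_iff insert_commute)
    then have "u \<in> S" using Sclosed wS by blast
    then show False using vS' by simp
  qed
  have lvE: "{l,v} \<notin> E" using ledge uv by blast
  have ich: "interchangeable E l u v w"
    unfolding interchangeable_def using lu vw lv lw uv uw lvE uwE by auto
  define F where "F = E - {{l,u},{v,w}}"
  define E' where "E' = F \<union> {{l,v},{u,w}}"
  have ts: "two_switch E l u v w = E'" unfolding two_switch_def E'_def F_def using ich by simp
  have FE: "F \<subseteq> E" "F \<subseteq> E'" unfolding F_def E'_def by auto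
  have inV: "l \<in> V" "u \<in> V" "v \<in> V" "w \<in> V" using sg_edge[OF sg lu] sg_edge[OF sg vw] by auto
  have sg': "simple_graph V E'"
    unfolding simple_graph_def
  proof (intro conjI ballI)
    show "finite V" using sg unfolding simple_graph_def by simp
    fix e assume "e \<in> E'"
    then have "e \<in> E \<or> e = {l,v} \<or> e = {u,w}" unfolding E'_def F_def by blast
    then show "\<exists>x y. e = {x, y} \<and> x \<noteq> y \<and> x \<in> V \<and> y \<in> V"
    proof (elim disjE)
      assume "e \<in> E" then show ?thesis using sg unfolding simple_graph_def by blast
    next
      assume "e = {l,v}" then show ?thesis using inV lv by blast
    next
      assume "e = {u,w}" then show ?thesis using inV uw by blast
    qed
  qed
  have liso: "\<And>z. {z,l} \<notin> F"
  proof
    fix z assume "{z,l} \<in> F"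
    then have "{l,z} \<in> E" "{l,z} \<noteq> {l,u}" unfolding F_def by (auto simp: insert_commute)
    then show False using ledge by blast
  qed
  have red: "\<And>a b. rch (E - {{v,w}}) a b \<Longrightarrow> rch F a b \<or> rch F a l \<or> rch F a u"
  proof -
    fix a b assume "rch (E - {{v,w}}) a b"
    then have "rch (insert {l,u} F) a b" by (rule rch_mono[rotated]) (auto simp: F_def)
    then show "rch F a b \<or> rch F a l \<or> rch F a u" using rch_insert[of "{l,u}" F a b] by blast
  qed
  have FE': "\<And>a b. rch F a b \<Longrightarrow> rch E' a b" by (rule rch_mono[OF FE(2)])
  have splitvw: "\<And>a b. rch E a b \<Longrightarrow> rch (E - {{v,w}}) a b \<or> rch (E - {{v,w}}) a v \<or> rch (E - {{v,w}}) a w"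
  proof -
    fix a b assume "rch E a b"
    then have "rch (insert {v,w} (E - {{v,w}})) a b" by (rule rch_mono[rotated]) auto
    then show "rch (E - {{v,w}}) a b \<or> rch (E - {{v,w}}) a v \<or> rch (E - {{v,w}}) a w"
      using rch_insert[of "{v,w}" "E - {{v,w}}" a b] by blast
  qed
  have rE: "\<And>a b. a \<in> V \<Longrightarrow> b \<in> V \<Longrightarrow> rch E a b" using cg unfolding connected_graph_def rch_def by blast
  have A: "rch E' v u"
  proof -
    have "rch (E - {{v,w}}) u v"
    proof -
      have "rch (E - {{v,w}}) u v \<or> rch (E - {{v,w}}) u w" using splitvw[OF rE[OF inV(2) inV(3)]] by blast
      moreover have "\<not> rch (E - {{v,w}}) u w"
      proof
        assume "rch (E - {{v,w}}) u w"
        then have "rch (E - {{v,w}}) w u" by (rule rch_sym)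
        then show False using uS by simp
      qed
      ultimately show ?thesis by blast
    qed
    then have "rch (E - {{v,w}}) v u" by (rule rch_sym)
    then have "rch F v u \<or> rch F v l" using red[of v u] by blast
    moreover have "\<not> rch F v l" using rch_iso[OF liso, of v] lv by blast
    ultimately show ?thesis using FE'[of v u] by blast
  qed
  have B: "rch E' w u" by (rule rch_edge) (simp add: E'_def insert_commute)
  have "rch E' l v" by (rule rch_edge) (simp add: E'_def)
  then have Cc: "rch E' l u" using A by (rule rch_trans)
  have allu: "\<And>x. x \<in> V \<Longrightarrow> rch E' x u"
  proof -
    fix x assume xV: "x \<in> V"
    show "rch E' x u"
    proof (cases "x = l")
      case True then show ?thesis using Cc by simp
    next
      case False
      have nl: "\<not> rch F x l" using rch_iso[OF liso, of x] False by blast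
      have "rch (E - {{v,w}}) x v \<or> rch (E - {{v,w}}) x w" using splitvw[OF rE[OF xV inV(3)]] by blast
      then show ?thesis
      proof
        assume "rch (E - {{v,w}}) x v"
        then have "rch F x v \<or> rch F x u" using red[of x v] nl by blast
        then show ?thesis using FE'[of x v] FE'[of x u] A rch_trans[of E' x v u] by blast
      next
        assume "rch (E - {{v,w}}) x w"
        then have "rch F x w \<or> rch F x u" using red[of x w] nl by blast
        then show ?thesis using FE'[of x w] FE'[of x u] B rch_trans[of E' x w u] by blast
      qed
    qed
  qed
  have "\<forall>x\<in>V. \<forall>y\<in>V. rch E' x y"
  proof (intro ballI)
    fix x y assume xy: "x \<in> V" "y \<in> V"
    have "rch E' x u" "rch E' u y" using allu[OF xy(1)] rch_sym[OF allu[OF xy(2)]] by auto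
    then show "rch E' x y" by (rule rch_trans)
  qed
  then have cg': "connected_graph V E'"
    unfolding connected_graph_def rch_def by simp
  have luC: "{l,u} \<notin> C"
  proof
    assume "{l,u} \<in> C"
    show False
    proof (rule cut_lemma[OF C \<open>{l,u} \<in> C\<close>, of "{l}"])
      show "l \<in> {l}" by simp
      show "u \<notin> {l}" using lu_ne by simp
      fix a b assume "{a,b} \<in> E" "a \<in> {l}" "b \<notin> {l}"
      then show "{a,b} = {l,u}" using ledge by auto
    qed
  qed
  have CE': "C \<subseteq> E'" using C vwC luC unfolding is_cycle_def E'_def F_def by blast
  have C': "is_cycle E' C" using cycle_mono[OF C CE'] .
  have uniq': "\<And>C'. is_cycle E' C' \<Longrightarrow> C' = C"
  proof -
    fix C' assume cyc: "is_cycle E' C'"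
    have sub: "C' \<subseteq> E'" using cyc unfolding is_cycle_def by blast
    have n1: "{l,v} \<notin> C'"
    proof
      assume "{l,v} \<in> C'"
      show False
      proof (rule cut_lemma[OF cyc \<open>{l,v} \<in> C'\<close>, of "{l}"])
        show "l \<in> {l}" by simp
        show "v \<notin> {l}" using lv by simp
        fix a b assume h: "{a,b} \<in> E'" "a \<in> {l}" "b \<notin> {l}"
        then have "a = l" by simp
        show "{a,b} = {l,v}"
        proof (cases "{a,b} \<in> F")
          case True
          then have "b = u" using ledge \<open>a = l\<close> FE(1) by blast
          then show ?thesis using True \<open>a = l\<close> unfolding F_def by simp
        next
          case False
          then have "{a,b} = {l,v} \<or> {a,b} = {u,w}" using h(1) unfolding E'_def by blast
          moreover have "{a,b} \<noteq> {u,w}" using \<open>a = l\<close> lu_ne lw by (auto simp: doubleton_eq_iff)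
          ultimately show ?thesis by blast
        qed
      qed
    qed
    have n2: "{u,w} \<notin> C'"
    proof
      assume "{u,w} \<in> C'"
      then have "{w,u} \<in> C'" by (simp add: insert_commute)
      show False
      proof (rule cut_lemma[OF cyc \<open>{w,u} \<in> C'\<close>, of S])
        show "w \<in> S" by (rule wS)
        show "u \<notin> S" using vS' by simp
        fix a b assume h: "{a,b} \<in> E'" "a \<in> S" "b \<notin> S"
        show "{a,b} = {w,u}"
        proof (cases "{a,b} \<in> F")
          case True
          then have "{a,b} \<in> E - {{v,w}}" unfolding F_def by blast
          then have "b \<in> S" using Sclosed h(2) by blast
          then show ?thesis using h(3) by simp
        next
          case False
          then have "{a,b} = {l,v} \<or> {a,b} = {u,w}" using h(1) unfolding E'_def by blast
          moreover have "{a,b} \<noteq> {l,v}" using h(2) lS vS' by (auto simp: doubleton_eq_iff)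
          ultimately show ?thesis by (auto simp: insert_commute)
        qed
      qed
    qed
    have "C' \<subseteq> E" using sub n1 n2 FE(1) unfolding E'_def by blast
    then show "C' = C" using uniq cycle_mono[OF cyc] by blast
  qed
  have "unicyclic V E'" unfolding unicyclic_def using sg' cg' C' uniq' by blast
  then show ?thesis unfolding u_switch_def using U ich ts by (simp add: E'_def)
qed


theorem lemma3p3:
  fixes V :: "'a set" and E :: "'a set set" and l u :: 'a
  assumes "unicyclic V E"
    and "{l, u} \<in> E"
    and "degree E l = 1"
    and "u \<in> cycle_vertices E"
  shows "(\<forall>v. v \<in> cycle_vertices E \<and> v \<noteq> u \<and> degree E v > 2 \<longrightarrow>
            (\<exists>a b c d. u_switch V E a b c d \<and> {l, v} \<in> two_switch E a b c d))
       \<and> (\<forall>v. v \<in> V \<and> v \<notin> cycle_vertices E \<and> degree E v \<ge> 2 \<longrightarrow>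
            (\<exists>a b c d. u_switch V E a b c d \<and> {l, v} \<in> two_switch E a b c d))"
proof -
  note U = assms(1) and lu = assms(2)
  have sg: "simple_graph V E" using U unfolding unicyclic_def by auto
  have finE: "finite E"
  proof -
    have "E \<subseteq> Pow V"
    proof
      fix e assume "e \<in> E"
      then obtain x y where "e = {x,y}" "x \<in> V" "y \<in> V" using sg unfolding simple_graph_def by blast
      then show "e \<in> Pow V" by simp
    qed
    moreover have "finite V" using sg unfolding simple_graph_def by simp
    ultimately show ?thesis using finite_subset by blast
  qed
  have ex1: "\<exists>!C. is_cycle E C" using U unfolding unicyclic_def by simp
  then obtain C where C: "is_cycle E C" by (rule ex1E)
  have uniq: "\<And>C'. is_cycle E C' \<Longrightarrow> C' = C" using ex1 C by (metis ex1E)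
  have cvs: "{\<Union>C' | C'. is_cycle E C'} = {\<Union>C}"
  proof (intro equalityI subsetI)
    fix X assume "X \<in> {\<Union>C' | C'. is_cycle E C'}"
    then obtain C' where "X = \<Union>C'" "is_cycle E C'" by blast
    then show "X \<in> {\<Union>C}" using uniq by simp
  next
    fix X assume "X \<in> {\<Union>C}"
    then show "X \<in> {\<Union>C' | C'. is_cycle E C'}" using C by blast
  qed
  have cv: "cycle_vertices E = \<Union>C" unfolding cycle_vertices_def cvs by simp
  have lu_ne: "l \<noteq> u" using sg_edge[OF sg lu] by simp
  have ldeg: "{e\<in>E. l \<in> e} = {{l,u}}"
  proof -
    have "card {e\<in>E. l \<in> e} = 1" using assms(3) unfolding degree_def .
    then obtain e where e: "{e\<in>E. l \<in> e} = {e}" using card_1_singletonE by blast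
    moreover have "{l,u} \<in> {e\<in>E. l \<in> e}" using lu by simp
    ultimately show ?thesis by auto
  qed
  have ledge: "\<And>x. {l,x} \<in> E \<Longrightarrow> x = u"
  proof -
    fix x assume "{l,x} \<in> E"
    then have "{l,x} \<in> {e\<in>E. l \<in> e}" by simp
    then have "{l,x} \<in> {{l,u}}" by (simp only: ldeg)
    then have "{l,x} = {l,u}" by simp
    then show "x = u" using lu_ne by (auto simp: doubleton_eq_iff)
  qed
  have uC: "u \<in> \<Union>C" using assms(4) cv by simp
  have edge_form: "\<And>e v. e \<in> E \<Longrightarrow> v \<in> e \<Longrightarrow> \<exists>w. e = {v,w} \<and> v \<noteq> w"
  proof -
    fix e v assume ev: "e \<in> E" "v \<in> e"
    then obtain x y where xy: "e = {x,y}" "x \<noteq> y" using sg unfolding simple_graph_def by blast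
    show "\<exists>w. e = {v,w} \<and> v \<noteq> w"
    proof (cases "v = x")
      case True then show ?thesis using xy by blast
    next
      case False then have "v = y" using xy ev by simp
      then show ?thesis using xy by (auto simp: insert_commute)
    qed
  qed
  show ?thesis
  proof (intro conjI allI impI)
    fix v assume h: "v \<in> cycle_vertices E \<and> v \<noteq> u \<and> degree E v > 2"
    then have vC: "v \<in> \<Union>C" and uv: "u \<noteq> v" and dv: "card {e\<in>E. v \<in> e} > 2"
      using cv unfolding degree_def by auto
    have "\<exists>e\<in>E. v \<in> e \<and> e \<notin> C"
    proof (rule ccontr)
      assume "\<not> ?thesis"
      then have "{e\<in>E. v \<in> e} \<subseteq> {e\<in>C. v \<in> e}" by blast
      moreover have "finite {e\<in>C. v \<in> e}"
      proof -
        have "C \<subseteq> E" using C unfolding is_cycle_def by blast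
        then have "{e\<in>C. v \<in> e} \<subseteq> E" by blast
        then show ?thesis using finE by (rule finite_subset)
      qed
      ultimately have "card {e\<in>E. v \<in> e} \<le> card {e\<in>C. v \<in> e}" by (rule card_mono[rotated])
      then show False using cycle_deg[OF C, of v] dv by simp
    qed
    then obtain e where e: "e \<in> E" "v \<in> e" "e \<notin> C" by blast
    then obtain w where w: "e = {v,w}" "v \<noteq> w" using edge_form by blast
    have vw: "{v,w} \<in> E" "{v,w} \<notin> C" using e w by auto
    have vS: "\<not> rch (E - {{v,w}}) w v"
    proof
      assume "rch (E - {{v,w}}) w v"
      then obtain C'' where "is_cycle E C''" "{v,w} \<in> C''" using bridge[OF vw(1) w(2)] by blast
      then show False using uniq[of C''] vw(2) by simp
    qed
    obtain vs k where vs: "length vs \<ge> 3" "distinct vs"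
      "C = {{vs ! i, vs ! ((i + 1) mod length vs)} | i. i < length vs}" "C \<subseteq> E"
      "k < length vs" "vs!k = v" using cycle_vert[OF C vC] by blast
    have n0: "0 < length vs" using vs(1) by linarith
    have "u \<in> set vs" using uC vs(3) n0 by (auto simp: nth_mem)
    then obtain k' where k': "k' < length vs" "vs!k' = u" by (metis in_set_conv_nth)
    have st: "\<And>j. j < length vs \<Longrightarrow> rch (E - {{v,w}}) w (vs!j) = rch (E - {{v,w}}) w (vs!((j+1) mod length vs))"
    proof -
      fix j assume j: "j < length vs"
      have "{vs!j, vs!((j+1) mod length vs)} \<in> C" using vs(3) j by blast
      then have ed: "{vs!j, vs!((j+1) mod length vs)} \<in> E - {{v,w}}" using vs(4) vw(2) by auto
      then have ed2: "{vs!((j+1) mod length vs), vs!j} \<in> E - {{v,w}}" by (simp add: insert_commute)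
      show "rch (E - {{v,w}}) w (vs!j) = rch (E - {{v,w}}) w (vs!((j+1) mod length vs))"
      proof
        assume "rch (E - {{v,w}}) w (vs!j)"
        then show "rch (E - {{v,w}}) w (vs!((j+1) mod length vs))" using rch_edge[OF ed] by (rule rch_trans)
      next
        assume "rch (E - {{v,w}}) w (vs!((j+1) mod length vs))"
        then show "rch (E - {{v,w}}) w (vs!j)" using rch_edge[OF ed2] by (rule rch_trans)
      qed
    qed
    have "rch (E - {{v,w}}) w u = rch (E - {{v,w}}) w v"
      using all_same[OF refl st, of k'] all_same[OF refl st, of k] k' vs(5,6) by simp
    then have uS: "\<not> rch (E - {{v,w}}) w u" using vS by simp
    have lv: "l \<noteq> v"
    proof
      assume "l = v"
      then have "degree E v = 1" using assms(3) by simp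
      then show False using h by simp
    qed
    have lw: "l \<noteq> w"
    proof
      assume "l = w"
      then have "{l,v} \<in> E" using vw(1) by (simp add: insert_commute)
      then show False using ledge uv by blast
    qed
    show "\<exists>a b c d. u_switch V E a b c d \<and> {l, v} \<in> two_switch E a b c d"
      using switch_ok[OF U C uniq lu ledge vw vS uS lv lw uv] by blast
  next
    fix v assume h: "v \<in> V \<and> v \<notin> cycle_vertices E \<and> degree E v \<ge> 2"
    then have vC: "v \<notin> \<Union>C" and dv: "card {e\<in>E. v \<in> e} \<ge> 2"
      using cv unfolding degree_def by auto
    have uv: "u \<noteq> v" using vC uC by auto
    obtain e1 e2 where e12: "e1 \<in> E" "v \<in> e1" "e2 \<in> E" "v \<in> e2" "e1 \<noteq> e2"
    proof -
      have "\<exists>a b. a \<in> {e\<in>E. v \<in> e} \<and> b \<in> {e\<in>E. v \<in> e} \<and> a \<noteq> b"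
      proof (rule ccontr)
        assume "\<not> ?thesis"
        then have "\<forall>a\<in>{e\<in>E. v \<in> e}. \<forall>b\<in>{e\<in>E. v \<in> e}. a = b" by blast
        moreover have "finite {e\<in>E. v \<in> e}" using finE by simp
        ultimately have "card {e\<in>E. v \<in> e} \<le> Suc 0" using card_le_Suc0_iff_eq by blast
        then show False using dv by simp
      qed
      then show ?thesis using that by blast
    qed
    obtain x where x: "e1 = {v,x}" "v \<noteq> x" using edge_form e12 by blast
    obtain y where y: "e2 = {v,y}" "v \<noteq> y" using edge_form e12 by blast
    have xy: "x \<noteq> y" using x y e12(5) by auto
    have vxE: "{v,x} \<in> E" "{v,y} \<in> E" using e12 x y by auto
    have nC: "\<And>z. {v,z} \<notin> C" using vC by auto
    have br: "\<And>z. {v,z} \<in> E \<Longrightarrow> v \<noteq> z \<Longrightarrow> \<not> rch (E - {{v,z}}) z v"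
    proof
      fix z assume "{v,z} \<in> E" "v \<noteq> z" "rch (E - {{v,z}}) z v"
      then obtain C'' where "is_cycle E C''" "{v,z} \<in> C''" using bridge[of v z E] by blast
      then show False using uniq[of C''] nC[of z] by simp
    qed
    have bx: "\<not> rch (E - {{v,x}}) x v" and by': "\<not> rch (E - {{v,y}}) y v" using br[OF vxE(1) x(2)] br[OF vxE(2) y(2)] by auto
    have vxvy: "{v,x} \<noteq> {v,y}" using xy x y by (auto simp: doubleton_eq_iff)
    have "\<not> rch (E - {{v,x}}) x u \<or> \<not> rch (E - {{v,y}}) y u"
    proof (rule ccontr)
      assume "\<not> ?thesis"
      then have rx: "rch (E - {{v,x}}) x u" and ry: "rch (E - {{v,y}}) y u" by auto
      let ?R = "E - {{v,x},{v,y}}"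
      have "rch (insert {v,x} ?R) y u" using ry by (rule rch_mono[rotated]) auto
      then have "rch ?R y u \<or> rch ?R y v \<or> rch ?R y x" using rch_insert[of "{v,x}" ?R y u] by blast
      moreover have RR: "?R \<subseteq> E - {{v,x}}" "?R \<subseteq> E - {{v,y}}" by auto
      moreover have yv: "rch (E - {{v,x}}) y v"
        by (rule rch_edge) (use vxE vxvy in \<open>auto simp: insert_commute\<close>)
      ultimately show False
      proof (elim disjE)
        assume "rch ?R y u"
        then have "rch ?R u y" by (rule rch_sym)
        then have "rch (E - {{v,x}}) u y" by (rule rch_mono[OF RR(1)])
        then have "rch (E - {{v,x}}) x y" by (rule rch_trans[OF rx])
        then have "rch (E - {{v,x}}) x v" using yv by (rule rch_trans)
        then show False using bx by simp
      next
        assume "rch ?R y v"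
        then have "rch (E - {{v,y}}) y v" by (rule rch_mono[OF RR(2)])
        then show False using by' by simp
      next
        assume "rch ?R y x"
        then have "rch ?R x y" by (rule rch_sym)
        then have "rch (E - {{v,x}}) x y" by (rule rch_mono[OF RR(1)])
        then have "rch (E - {{v,x}}) x v" using yv by (rule rch_trans)
        then show False using bx by simp
      qed
    qed
    then obtain w where w: "{v,w} \<in> E" "v \<noteq> w" "\<not> rch (E - {{v,w}}) w u"
    proof (elim disjE)
      assume "\<not> rch (E - {{v,x}}) x u" then show ?thesis using that[of x] vxE(1) x(2) by simp
    next
      assume "\<not> rch (E - {{v,y}}) y u" then show ?thesis using that[of y] vxE(2) y(2) by simp
    qed
    have vS: "\<not> rch (E - {{v,w}}) w v" using br[OF w(1) w(2)] .
    have lv: "l \<noteq> v"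
    proof
      assume "l = v"
      then have "degree E v = 1" using assms(3) by simp
      then show False using h by simp
    qed
    have lw: "l \<noteq> w"
    proof
      assume "l = w"
      then have "{l,v} \<in> E" using w(1) by (simp add: insert_commute)
      then show False using ledge uv by blast
    qed
    show "\<exists>a b c d. u_switch V E a b c d \<and> {l, v} \<in> two_switch E a b c d"
      using switch_ok[OF U C uniq lu ledge w(1) nC vS w(3) lv lw uv] by blast
  qed
qed

end
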